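(* Fix $\Lambda_0,\dots,\Lambda_{N-1}\ge0$ with a unique minimizer $j_\star$ ($\Lambda_j>\Lambda_{j_\star}$ for $j\ne j_\star$), fix $\boldsymbol\Gamma^{(1)}$ irreducible, and for $\theta>0$ let $-\mu(\theta)$ be the largest eigenvalue of $\theta\boldsymbol\Theta^{(1)}-\boldsymbol\Psi$ and $-\lambda(\theta)$ the largest eigenvalue of $\theta\boldsymbol\Gamma^{(1)}-\mathrm{diag}(\Lambda_j)$. Then as $\theta\to0$, $$\mu(\theta)=2\Lambda_{j_\star}+2\theta\sum_{j\neq j_\star}\Gamma^{(1)}_{jj_\star}-4\theta^2\sum_{j\neq j_\star}\frac{(\Gamma^{(1)}_{jj_\star})^2}{\Lambda_j-\Lambda_{j_\star}}+O(\theta^3),$$ the corresponding unit eigenvector is $\mathbf W^{(0)}+\theta\mathbf W^{(1)}+O(\theta^2)$ with $W^{(0)}_{jl}=\delta_{jj_\star}\delta_{lj_\star}$, $W^{(1)}_{j_\star l}=2\Gamma^{(1)}_{j_\star l}/(\Lambda_l-\Lambda_{j_\star})$ for $l>j_\star$, $W^{(1)}_{jj_\star}=2\Gamma^{(1)}_{jj_\star}/(\Lambda_j-\Lambda_{j_\star})$ for $j<j_\star$, and $W^{(1)}_{jl}=0$ otherwise; and $$\mu(\theta)-2\lambda(\theta)=-2\theta^2\sum_{j\neq j_\star}\frac{(\Gamma^{(1)}_{jj_\star})^2}{\Lambda_j-\Lambda_{j_\star}}+O(\theta^3),$$ which is negative for $\theta$ small enough.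
   Context: Let $N\ge 2$. Let $\boldsymbol\Gamma^{(1)}=(\Gamma^{(1)}_{jl})_{j,l=0}^{N-1}$ be a real symmetric matrix with $\Gamma^{(1)}_{jl}\ge 0$ for $j\neq l$ and $\Gamma^{(1)}_{jj}=-\sum_{l\neq j}\Gamma^{(1)}_{jl}$; it is called irreducible if the graph on $\{0,\dots,N-1\}$ with an edge between $j\neq l$ whenever $\Gamma^{(1)}_{jl}>0$ is connected. Let $\mathcal T_N=\{(j,l)\in\mathbb N^2:0\le j\le l\le N-1\}$; for $\mathbf S\in\mathbb R^{\mathcal T_N}$, $S_{jl}$ with $j>l$ means $S_{lj}$. Define $(\boldsymbol\Psi\mathbf S)_{jl}=(\Lambda_j+\Lambda_l)S_{jl}$ and $(\boldsymbol\Theta^{(1)}\mathbf S)_{jl}=2\Gamma^{(1)}_{jl}\mathbf 1_{j\neq l}(S_{jj}+S_{ll}-2S_{jl})+\sum_{n\notin\{j,l\}}[\Gamma^{(1)}_{ln}(S_{jn}-S_{jl})+\Gamma^{(1)}_{jn}(S_{nl}-S_{jl})]$. *)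

theory Defs
  imports Complex_Main
begin

text \<open>Vectors in R^{T_N} are represented
  as functions nat \<times> nat \<Rightarrow> real vanishing outside T_N; vectors in R^N as
  functions nat \<Rightarrow> real vanishing outside {..<N}.\<close>

definition Tset :: "nat \<Rightarrow> (nat \<times> nat) set" where
  "Tset N = {(j, l). j \<le> l \<and> l < N}"

definition entry :: "(nat \<times> nat \<Rightarrow> real) \<Rightarrow> nat \<Rightarrow> nat \<Rightarrow> real" where
  "entry S j l = (if j \<le> l then S (j, l) else S (l, j))"

definition Psi :: "nat \<Rightarrow> (nat \<Rightarrow> real) \<Rightarrow> (nat \<times> nat \<Rightarrow> real) \<Rightarrow> (nat \<times> nat \<Rightarrow> real)" where
  "Psi N Lam S = (\<lambda>(j, l). if (j, l) \<in> Tset N then (Lam j + Lam l) * S (j, l) else 0)"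

definition Theta1 :: "nat \<Rightarrow> (nat \<Rightarrow> nat \<Rightarrow> real) \<Rightarrow> (nat \<times> nat \<Rightarrow> real) \<Rightarrow> (nat \<times> nat \<Rightarrow> real)" where
  "Theta1 N G S = (\<lambda>(j, l). if (j, l) \<in> Tset N then
      2 * G j l * (if j \<noteq> l then 1 else 0) * (entry S j j + entry S l l - 2 * entry S j l)
      + (\<Sum>n \<in> {..<N} - {j, l}. G l n * (entry S j n - entry S j l) + G j n * (entry S n l - entry S j l))
    else 0)"

definition is_eigenvalue_on :: "'a set \<Rightarrow> (('a \<Rightarrow> real) \<Rightarrow> ('a \<Rightarrow> real)) \<Rightarrow> real \<Rightarrow> bool" where
  "is_eigenvalue_on I A ev \<longleftrightarrow>
     (\<exists>v. (\<forall>x. x \<notin> I \<longrightarrow> v x = 0) \<and> (\<exists>x\<in>I. v x \<noteq> 0) \<and> (\<forall>x\<in>I. A v x = ev * v x))"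

definition largest_eigenvalue :: "'a set \<Rightarrow> (('a \<Rightarrow> real) \<Rightarrow> ('a \<Rightarrow> real)) \<Rightarrow> real" where
  "largest_eigenvalue I A = Max {ev. is_eigenvalue_on I A ev}"

definition mu :: "nat \<Rightarrow> (nat \<Rightarrow> nat \<Rightarrow> real) \<Rightarrow> (nat \<Rightarrow> real) \<Rightarrow> real \<Rightarrow> real" where
  "mu N G Lam \<theta> = - largest_eigenvalue (Tset N) (\<lambda>S p. \<theta> * Theta1 N G S p - Psi N Lam S p)"

definition lam :: "nat \<Rightarrow> (nat \<Rightarrow> nat \<Rightarrow> real) \<Rightarrow> (nat \<Rightarrow> real) \<Rightarrow> real \<Rightarrow> real" where
  "lam N G Lam \<theta> = - largest_eigenvalue {..<N} (\<lambda>v j. \<theta> * (\<Sum>l<N. G j l * v l) - Lam j * v j)"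

definition rate_matrix :: "nat \<Rightarrow> (nat \<Rightarrow> nat \<Rightarrow> real) \<Rightarrow> bool" where
  "rate_matrix N G \<longleftrightarrow>
     (\<forall>j<N. \<forall>l<N. G j l = G l j) \<and>
     (\<forall>j<N. \<forall>l<N. j \<noteq> l \<longrightarrow> G j l \<ge> 0) \<and>
     (\<forall>j<N. G j j = - (\<Sum>l \<in> {..<N} - {j}. G j l))"

definition irreducible_rate :: "nat \<Rightarrow> (nat \<Rightarrow> nat \<Rightarrow> real) \<Rightarrow> bool" where
  "irreducible_rate N G \<longleftrightarrow>
     (\<forall>j<N. \<forall>l<N. (j, l) \<in> {(a, b). a < N \<and> b < N \<and> a \<noteq> b \<and> G a b > 0}\<^sup>*)"

definition W0 :: "nat \<Rightarrow> nat \<times> nat \<Rightarrow> real" where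
  "W0 js = (\<lambda>(j, l). if j = js \<and> l = js then 1 else 0)"

definition W1 :: "(nat \<Rightarrow> nat \<Rightarrow> real) \<Rightarrow> (nat \<Rightarrow> real) \<Rightarrow> nat \<Rightarrow> nat \<times> nat \<Rightarrow> real" where
  "W1 G Lam js = (\<lambda>(j, l).
     if j = js \<and> js < l then 2 * G js l / (Lam l - Lam js)
     else if l = js \<and> j < js then 2 * G j js / (Lam j - Lam js)
     else 0)"

end

theory Submission
  imports Defs "Jordan_Normal_Form.Char_Poly"
begin


lemma eig_finite:
  assumes fin: "finite I"
    and rep: "\<And>v p. (\<forall>x. x\<notin>I \<longrightarrow> v x = 0) \<Longrightarrow> p \<in> I \<Longrightarrow> A v p = (\<Sum>q\<in>I. a p q * v q)"
  shows "finite {ev. is_eigenvalue_on I A ev}"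
proof -
  obtain f where f: "bij_betw f {0..<card I} I" using ex_bij_betw_nat_finite[OF fin] by blast
  define n where "n = card I"
  define M where "M = mat n n (\<lambda>(i,k). a (f i) (f k))"
  have Mc: "M \<in> carrier_mat n n" by (simp add: M_def)
  have "{ev. is_eigenvalue_on I A ev} \<subseteq> {x. poly (char_poly M) x = 0}"
  proof
    fix ev assume "ev \<in> {ev. is_eigenvalue_on I A ev}"
    then obtain v where v0: "\<forall>x. x\<notin>I \<longrightarrow> v x = 0" and vnz: "\<exists>x\<in>I. v x \<noteq> 0"
      and ve: "\<forall>x\<in>I. A v x = ev * v x"
      by (auto simp: is_eigenvalue_on_def)
    define w where "w = vec n (\<lambda>i. v (f i))"
    have "eigenvector M w ev"
      unfolding eigenvector_def
    proof (intro conjI)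
      show "w \<in> carrier_vec (dim_row M)" by (simp add: w_def M_def)
      show "w \<noteq> 0\<^sub>v (dim_row M)"
      proof
        assume w0: "w = 0\<^sub>v (dim_row M)"
        obtain x where x: "x \<in> I" "v x \<noteq> 0" using vnz by blast
        then obtain i where i: "i < n" "f i = x" using f unfolding n_def bij_betw_def by force
        then have "w $ i = 0" using w0 by (simp add: M_def)
        then show False using x i by (simp add: w_def)
      qed
      show "M *\<^sub>v w = ev \<cdot>\<^sub>v w"
      proof (rule eq_vecI)
        fix i assume i: "i < dim_vec (ev \<cdot>\<^sub>v w)"
        then have i: "i < n" by (simp add: w_def)
        have fi: "f i \<in> I" using f i unfolding n_def bij_betw_def by auto
        have "(M *\<^sub>v w) $ i = (\<Sum>k\<in>{0..<n}. a (f i) (f k) * v (f k))"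
          using i by (simp add: M_def w_def mult_mat_vec_def scalar_prod_def)
        also have "\<dots> = (\<Sum>q\<in>I. a (f i) q * v q)"
          using sum.reindex_bij_betw[OF f, of "\<lambda>q. a (f i) q * v q"] by (simp add: n_def)
        also have "\<dots> = A v (f i)" using rep[OF v0 fi] by simp
        also have "\<dots> = ev * v (f i)" using ve fi by simp
        finally show "(M *\<^sub>v w) $ i = (ev \<cdot>\<^sub>v w) $ i" using i by (simp add: w_def)
      qed (simp add: w_def M_def)
    qed
    then have "eigenvalue M ev" by (auto simp: eigenvalue_def)
    then show "ev \<in> {x. poly (char_poly M) x = 0}" using eigenvalue_root_char_poly[OF Mc] by simp
  qed
  moreover have "char_poly M \<noteq> 0" using degree_monic_char_poly[OF Mc] by auto
  ultimately show ?thesis using poly_roots_finite finite_subset by blast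
qed

lemma eig_cong:
  assumes "\<And>v p. (\<forall>x. x\<notin>I \<longrightarrow> v x = 0) \<Longrightarrow> p \<in> I \<Longrightarrow> A1 v p = A2 v p"
  shows "is_eigenvalue_on I A1 = is_eigenvalue_on I A2"
proof (intro ext iffI)
  fix ev assume "is_eigenvalue_on I A1 ev"
  then obtain v where v: "\<forall>x. x\<notin>I \<longrightarrow> v x = 0" "\<exists>x\<in>I. v x \<noteq> 0" "\<forall>x\<in>I. A1 v x = ev * v x"
    unfolding is_eigenvalue_on_def by blast
  then show "is_eigenvalue_on I A2 ev" unfolding is_eigenvalue_on_def using assms[OF v(1)] by (intro exI[of _ v]) auto
next
  fix ev assume "is_eigenvalue_on I A2 ev"
  then obtain v where v: "\<forall>x. x\<notin>I \<longrightarrow> v x = 0" "\<exists>x\<in>I. v x \<noteq> 0" "\<forall>x\<in>I. A2 v x = ev * v x"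
    unfolding is_eigenvalue_on_def by blast
  then show "is_eigenvalue_on I A1 ev" unfolding is_eigenvalue_on_def using assms[OF v(1)] by (intro exI[of _ v]) auto
qed


lemma lin_rep:
  fixes A :: "('a \<Rightarrow> real) \<Rightarrow> 'a \<Rightarrow> real"
  assumes fin: "finite I"
    and add: "\<And>v w. A (\<lambda>x. v x + w x) = (\<lambda>x. A v x + A w x)"
    and scal: "\<And>c v. A (\<lambda>x. c * v x) = (\<lambda>x. c * A v x)"
    and S: "\<forall>x. x\<notin>I \<longrightarrow> S x = 0"
  shows "A S p = (\<Sum>q\<in>I. S q * A (\<lambda>x. if x = q then 1 else 0) p)"
proof -
  have z: "A (\<lambda>x. 0) = (\<lambda>x. 0)" using scal[of 0 "\<lambda>x. 0"] by simp
  have gen: "A (\<lambda>x. \<Sum>q\<in>F. S q * (if x = q then 1 else 0)) p = (\<Sum>q\<in>F. S q * A (\<lambda>x. if x = q then 1 else 0) p)"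
    if "finite F" for F
    using that
  proof (induction F rule: finite_induct)
    case empty then show ?case using z by simp
  next
    case (insert q F)
    define u where "u = (\<lambda>x::'a. S q * (if x = q then 1 else (0::real)))"
    define w where "w = (\<lambda>x. \<Sum>q\<in>F. S q * (if x = q then 1 else (0::real)))"
    have e1: "(\<lambda>x. \<Sum>q\<in>insert q F. S q * (if x = q then 1 else 0)) = (\<lambda>x. u x + w x)"
      using insert(1,2) unfolding u_def w_def by (intro ext) simp
    have e2: "A u = (\<lambda>x. S q * A (\<lambda>x. if x = q then 1 else 0) x)"
      unfolding u_def by (rule scal)
    have "A (\<lambda>x. \<Sum>q\<in>insert q F. S q * (if x = q then 1 else 0)) p = A u p + A w p"
      unfolding e1 add by simp
    also have "\<dots> = S q * A (\<lambda>x. if x = q then 1 else 0) p + (\<Sum>q\<in>F. S q * A (\<lambda>x. if x = q then 1 else 0) p)"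
      unfolding e2 w_def insert(3) by simp
    finally show ?case using insert(1,2) by simp
  qed
  have "S = (\<lambda>x. \<Sum>q\<in>I. S q * (if x = q then 1 else 0))"
  proof
    fix x
    have "(\<Sum>q\<in>I. S q * (if x = q then 1 else 0)) = (\<Sum>q\<in>I. if x = q then S q else 0)"
      by (rule sum.cong) auto
    also have "\<dots> = (if x \<in> I then S x else 0)" using fin by (simp add: sum.delta)
    finally show "S x = (\<Sum>q\<in>I. S q * (if x = q then 1 else 0))" using S by auto
  qed
  then have "A S p = A (\<lambda>x. \<Sum>q\<in>I. S q * (if x = q then 1 else 0)) p"
    by (rule arg_cong[where f="\<lambda>f. A f p"])
  also have "\<dots> = (\<Sum>q\<in>I. S q * A (\<lambda>x. if x = q then 1 else 0) p)" by (rule gen[OF fin])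
  finally show ?thesis .
qed



lemma abs_div_le:
  fixes X a c B :: real
  assumes "0 < c" "c \<le> a" "\<bar>X\<bar> \<le> B"
  shows "\<bar>X / a\<bar> \<le> B / c"
proof -
  have "\<bar>X / a\<bar> = \<bar>X\<bar> / a" using assms by simp
  also have "\<dots> \<le> B / a" using assms by (simp add: divide_right_mono)
  also have "\<dots> \<le> B / c" proof (rule divide_left_mono)
    show "0 \<le> B" using assms(3) by linarith
    show "0 < a * c" using assms by simp
  qed (use assms in auto)
  finally show ?thesis .
qed

lemma frac_err:
  fixes X X0 a a0 g K t r :: real
  assumes g: "0 < g" and a0: "g \<le> a0" and a: "3*g/4 \<le> a"
    and at: "\<bar>a - a0\<bar> \<le> t" and Xr: "\<bar>X - X0\<bar> \<le> r" and X0: "\<bar>X0\<bar> \<le> K"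
  shows "\<bar>X / a - X0 / a0\<bar> \<le> (4/3) * (r / g + K * t / g^2)"
proof -
  have apos: "0 < a" using g a by simp
  have a0pos: "0 < a0" using g a0 by simp
  have eq: "X / a - X0 / a0 = (X - X0) / a + X0 * (a0 - a) / (a * a0)"
    using apos a0pos by (simp add: field_simps)
  have "\<bar>(X - X0) / a\<bar> \<le> r / (3*g/4)" by (rule abs_div_le) (use g a Xr in auto)
  also have "\<dots> = (4/3) * (r / g)" by simp
  finally have t1: "\<bar>(X - X0) / a\<bar> \<le> (4/3) * (r / g)" .
  have "\<bar>X0 * (a0 - a)\<bar> \<le> K * t"
    using X0 at by (simp add: abs_mult abs_minus_commute mult_mono')
  moreover have "3*g/4 * g \<le> a * a0" using g a a0 by (intro mult_mono) auto
  ultimately have "\<bar>X0 * (a0 - a) / (a * a0)\<bar> \<le> K * t / (3*g/4 * g)"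
    by (intro abs_div_le) (use g in auto)
  also have "\<dots> = (4/3) * (K * t / g^2)" by (simp add: power2_eq_square)
  finally have t2: "\<bar>X0 * (a0 - a) / (a * a0)\<bar> \<le> (4/3) * (K * t / g^2)" .
  have "\<bar>(X - X0) / a + X0 * (a0 - a) / (a * a0)\<bar> \<le> \<bar>(X - X0) / a\<bar> + \<bar>X0 * (a0 - a) / (a * a0)\<bar>"
    by (rule abs_triangle_ineq)
  then show ?thesis unfolding eq using t1 t2 by (simp add: distrib_left)
qed


lemma zero_if_le_geom:
  fixes x :: real
  assumes "\<And>k::nat. \<bar>x\<bar> \<le> C * (1/2)^k"
  shows "x = 0"
proof (rule ccontr)
  assume "x \<noteq> 0"
  then have xp: "0 < \<bar>x\<bar>" by simp
  have "(\<lambda>k. C * (1/2::real)^k) \<longlonglongrightarrow> C * 0"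
    by (intro tendsto_mult tendsto_const LIMSEQ_power_zero) auto
  then have "\<bar>x\<bar> \<le> 0" using assms by (intro LIMSEQ_le_const[of _ 0]) auto
  then show False using xp by simp
qed





locale pert =
  fixes I :: "'a set" and s :: 'a and b :: "'a \<Rightarrow> 'a \<Rightarrow> real" and d :: "'a \<Rightarrow> real" and g K :: real
  assumes finI: "finite I" and sI: "s \<in> I" and gpos: "0 < g"
    and gap: "\<And>p. p \<in> I \<Longrightarrow> p \<noteq> s \<Longrightarrow> d s + g \<le> d p"
    and Kpos: "0 < K" and Kb: "\<And>p. p \<in> I \<Longrightarrow> (\<Sum>q\<in>I. \<bar>b p q\<bar>) \<le> K"
begin

definition Bop :: "('a \<Rightarrow> real) \<Rightarrow> 'a \<Rightarrow> real" where "Bop v p = (\<Sum>q\<in>I. b p q * v q)"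

lemma b_le: "p \<in> I \<Longrightarrow> q \<in> I \<Longrightarrow> \<bar>b p q\<bar> \<le> K"
  using Kb[of p] member_le_sum[of q I "\<lambda>q. \<bar>b p q\<bar>"] finI by auto

lemma Bop_bound_sub:
  assumes "J \<subseteq> I" "\<And>q. q \<in> J \<Longrightarrow> \<bar>v q\<bar> \<le> M" "0 \<le> M" "p \<in> I"
  shows "\<bar>\<Sum>q\<in>J. b p q * v q\<bar> \<le> K * M"
proof -
  have fJ: "finite J" using assms(1) finI finite_subset by blast
  have "\<bar>\<Sum>q\<in>J. b p q * v q\<bar> \<le> (\<Sum>q\<in>J. \<bar>b p q * v q\<bar>)" by (rule sum_abs)
  also have "\<dots> \<le> (\<Sum>q\<in>J. \<bar>b p q\<bar> * M)"
    by (rule sum_mono) (use assms(2) in \<open>auto simp: abs_mult intro: mult_left_mono\<close>)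
  also have "\<dots> = (\<Sum>q\<in>J. \<bar>b p q\<bar>) * M" by (simp add: sum_distrib_right)
  also have "(\<Sum>q\<in>J. \<bar>b p q\<bar>) \<le> (\<Sum>q\<in>I. \<bar>b p q\<bar>)"
    by (rule sum_mono2[OF finI assms(1)]) auto
  then have "(\<Sum>q\<in>J. \<bar>b p q\<bar>) * M \<le> K * M"
    using Kb[OF assms(4)] assms(3) by (intro mult_right_mono) auto
  finally show ?thesis .
qed

lemma Bop_bound:
  assumes "\<And>q. q \<in> I \<Longrightarrow> \<bar>v q\<bar> \<le> M" "p \<in> I"
  shows "\<bar>Bop v p\<bar> \<le> K * M"
proof -
  have "0 \<le> M" using assms(1)[OF sI] by linarith
  then show ?thesis unfolding Bop_def using Bop_bound_sub[of I v M p] assms by auto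
qed

lemma Bop_split: "Bop v p = b p s * v s + (\<Sum>q\<in>I-{s}. b p q * v q)"
  unfolding Bop_def using sum.remove[OF finI sI] by simp

lemma analyze:
  assumes t: "0 < t" "t * K \<le> g / 8"
    and u1: "u s = 1" and ub: "\<And>p. p \<in> I \<Longrightarrow> \<bar>u p\<bar> \<le> 1"
    and eqs: "e = - d s + t * Bop u s"
    and eqp: "\<And>p. p \<in> I \<Longrightarrow> p \<noteq> s \<Longrightarrow> t * Bop u p - d p * u p = e * u p"
  shows "\<And>p. p \<in> I \<Longrightarrow> p \<noteq> s \<Longrightarrow> \<bar>u p\<bar> \<le> 2 * t * K / g"
    and "\<And>p. p \<in> I \<Longrightarrow> p \<noteq> s \<Longrightarrow> \<bar>u p - t * b p s / (d p - d s)\<bar> \<le> 4 * K^2 / g^2 * t^2"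
    and "\<bar>e - (- d s + t * b s s + t^2 * (\<Sum>q\<in>I-{s}. b s q * b q s / (d q - d s)))\<bar> \<le> 4 * K^3 / g^2 * t^3"
proof -
  have BK: "\<bar>Bop u p\<bar> \<le> K" if "p \<in> I" for p using Bop_bound[of u 1 p] ub that by simp
  have es: "\<bar>e + d s\<bar> \<le> t * K" using BK[OF sI] eqs t by (simp add: abs_mult)
  have ap: "7 * g / 8 \<le> e + d p" if "p \<in> I" "p \<noteq> s" for p
    using gap[OF that] es t by linarith
  have up: "u p = t * Bop u p / (e + d p)" if "p \<in> I" "p \<noteq> s" for p
  proof -
    have "0 < e + d p" using ap[OF that] gpos by linarith
    moreover have "t * Bop u p = (e + d p) * u p" using eqp[OF that] by (simp add: algebra_simps)
    ultimately show ?thesis by (simp add: field_simps)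
  qed
  show ub2: "\<bar>u p\<bar> \<le> 2 * t * K / g" if "p \<in> I" "p \<noteq> s" for p
  proof -
    have "\<bar>t * Bop u p\<bar> \<le> t * K" using BK[OF that(1)] t by (simp add: abs_mult)
    then have "\<bar>t * Bop u p / (e + d p)\<bar> \<le> t * K / (7 * g / 8)"
      by (intro abs_div_le) (use ap[OF that] gpos in auto)
    also have "\<dots> \<le> 2 * t * K / g" using gpos t Kpos by (simp add: field_simps)
    finally show ?thesis using up[OF that] by simp
  qed
  define eps where "eps = 2 * t * K / g"
  have eps0: "0 \<le> eps" using t Kpos gpos by (simp add: eps_def)
  have R: "\<bar>Bop u p - b p s\<bar> \<le> K * eps" if "p \<in> I" for p
  proof -
    have "Bop u p - b p s = (\<Sum>q\<in>I-{s}. b p q * u q)" using Bop_split[of u p] u1 by simp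
    also have "\<bar>\<dots>\<bar> \<le> K * eps"
      by (rule Bop_bound_sub) (use that ub2 eps0 in \<open>auto simp: eps_def\<close>)
    finally show ?thesis .
  qed
  show err: "\<bar>u p - t * b p s / (d p - d s)\<bar> \<le> 4 * K^2 / g^2 * t^2" if "p \<in> I" "p \<noteq> s" for p
  proof -
    have "\<bar>Bop u p / (e + d p) - b p s / (d p - d s)\<bar> \<le> (4/3) * (K * eps / g + K * (t * K) / g^2)"
    proof (rule frac_err)
      show "0 < g" by (rule gpos)
      show "g \<le> d p - d s" using gap[OF that] by simp
      show "3 * g / 4 \<le> e + d p" using ap[OF that] gpos by simp
      show "\<bar>e + d p - (d p - d s)\<bar> \<le> t * K" using es by simp
      show "\<bar>Bop u p - b p s\<bar> \<le> K * eps" by (rule R[OF that(1)])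
      show "\<bar>b p s\<bar> \<le> K" by (rule b_le[OF that(1) sI])
    qed
    also have "\<dots> = 4 * K^2 / g^2 * t" unfolding eps_def using gpos by (simp add: field_simps power2_eq_square)
    finally have h: "\<bar>Bop u p / (e + d p) - b p s / (d p - d s)\<bar> \<le> 4 * K^2 / g^2 * t" .
    have "u p - t * b p s / (d p - d s) = t * (Bop u p / (e + d p) - b p s / (d p - d s))"
      using up[OF that] by (simp add: algebra_simps)
    then have "\<bar>u p - t * b p s / (d p - d s)\<bar> = t * \<bar>Bop u p / (e + d p) - b p s / (d p - d s)\<bar>"
      using t by (simp add: abs_mult)
    also have "\<dots> \<le> t * (4 * K^2 / g^2 * t)" using h t by (intro mult_left_mono) auto
    finally show ?thesis by (simp add: power2_eq_square mult_ac)
  qed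
  have "e - (- d s + t * b s s + t^2 * (\<Sum>q\<in>I-{s}. b s q * b q s / (d q - d s)))
        = t * (\<Sum>q\<in>I-{s}. b s q * (u q - t * b q s / (d q - d s)))"
    using eqs Bop_split[of u s] u1
    by (simp add: algebra_simps sum_subtractf sum_distrib_left power2_eq_square)
  also have "\<bar>\<dots>\<bar> \<le> t * (K * (4 * K^2 / g^2 * t^2))"
  proof -
    have "\<bar>\<Sum>q\<in>I-{s}. b s q * (u q - t * b q s / (d q - d s))\<bar> \<le> K * (4 * K^2 / g^2 * t^2)"
      by (rule Bop_bound_sub) (use err sI in auto)
    then have "t * \<bar>\<Sum>q\<in>I-{s}. b s q * (u q - t * b q s / (d q - d s))\<bar> \<le> t * (K * (4 * K^2 / g^2 * t^2))"
      using t by (intro mult_left_mono) auto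
    then show ?thesis using t by (simp only: abs_mult abs_of_pos)
  qed
  also have "\<dots> = 4 * K^3 / g^2 * t^3" by (simp add: power2_eq_square power3_eq_cube)
  finally show "\<bar>e - (- d s + t * b s s + t^2 * (\<Sum>q\<in>I-{s}. b s q * b q s / (d q - d s)))\<bar> \<le> 4 * K^3 / g^2 * t^3" .
qed

definition U where "U = {u. u s = 1 \<and> (\<forall>p. p \<notin> I \<longrightarrow> u p = 0) \<and> (\<forall>p\<in>I. \<bar>u p\<bar> \<le> 1)}"

definition F where "F t u = (\<lambda>p. if p = s then 1 else if p \<in> I then t * Bop u p / (- d s + t * Bop u s + d p) else 0)"

lemma Bop_diff: "Bop u p - Bop w p = Bop (\<lambda>q. u q - w q) p"
  unfolding Bop_def by (simp add: sum_subtractf algebra_simps)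

lemma U_bound: "u \<in> U \<Longrightarrow> p \<in> I \<Longrightarrow> \<bar>t * Bop u p\<bar> \<le> t * K" if "0 < t"
proof -
  assume "u \<in> U" "p \<in> I"
  then have "\<bar>Bop u p\<bar> \<le> K * 1" by (intro Bop_bound) (auto simp: U_def)
  then show ?thesis using that by (simp add: abs_mult)
qed

lemma F_U:
  assumes t: "0 < t" "t * K \<le> g / 8" and u: "u \<in> U"
  shows "F t u \<in> U"
proof -
  have "\<bar>F t u p\<bar> \<le> 1" if p: "p \<in> I" "p \<noteq> s" for p
  proof -
    have den: "7 * g / 8 \<le> - d s + t * Bop u s + d p"
      using gap[OF p] U_bound[OF t(1) u sI] t by linarith
    have "\<bar>t * Bop u p / (- d s + t * Bop u s + d p)\<bar> \<le> (g / 8) / (7 * g / 8)"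
      by (rule abs_div_le) (use den gpos U_bound[OF t(1) u p(1)] t in auto)
    also have "\<dots> \<le> 1" using gpos by simp
    finally show ?thesis using p by (simp add: F_def)
  qed
  then show ?thesis unfolding U_def using sI by (auto simp: F_def)
qed

lemma F_contr:
  assumes t: "0 < t" "t * K \<le> g / 8" and u: "u \<in> U" and w: "w \<in> U"
    and dl: "0 \<le> dl" "\<And>q. q \<in> I \<Longrightarrow> \<bar>u q - w q\<bar> \<le> dl"
  shows "\<bar>F t u p - F t w p\<bar> \<le> dl / 2"
proof (cases "p \<in> I \<and> p \<noteq> s")
  case False then show ?thesis using dl by (auto simp: F_def)
next
  case True
  then have p: "p \<in> I" "p \<noteq> s" by auto
  define g' where "g' = 7 * g / 8"
  have g'p: "0 < g'" using gpos by (simp add: g'_def)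
  have dif: "\<bar>Bop u q - Bop w q\<bar> \<le> K * dl" if "q \<in> I" for q
    unfolding Bop_diff by (rule Bop_bound) (use dl that in auto)
  have a0: "g' \<le> - d s + t * Bop w s + d p"
    using gap[OF p] U_bound[OF t(1) w sI] t unfolding g'_def by linarith
  have a: "3 * g' / 4 \<le> - d s + t * Bop u s + d p"
    using gap[OF p] U_bound[OF t(1) u sI] t gpos unfolding g'_def by linarith
  have "\<bar>Bop u p / (- d s + t * Bop u s + d p) - Bop w p / (- d s + t * Bop w s + d p)\<bar>
        \<le> (4/3) * (K * dl / g' + K * (t * (K * dl)) / g'^2)"
  proof (rule frac_err[OF g'p a0 a])
    have "\<bar>t * Bop u s - t * Bop w s\<bar> \<le> t * (K * dl)"
      using dif[OF sI] t by (simp add: abs_mult right_diff_distrib[symmetric])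
    then show "\<bar>- d s + t * Bop u s + d p - (- d s + t * Bop w s + d p)\<bar> \<le> t * (K * dl)" by simp
    show "\<bar>Bop u p - Bop w p\<bar> \<le> K * dl" by (rule dif[OF p(1)])
    show "\<bar>Bop w p\<bar> \<le> K" using Bop_bound[of w 1 p] w p by (auto simp: U_def)
  qed
  then have h: "t * \<bar>Bop u p / (- d s + t * Bop u s + d p) - Bop w p / (- d s + t * Bop w s + d p)\<bar>
        \<le> t * ((4/3) * (K * dl / g' + K * (t * (K * dl)) / g'^2))"
    using t by (intro mult_left_mono) auto
  define x where "x = t * K / g"
  have x0: "0 < x" using t Kpos gpos by (simp add: x_def)
  have x1: "x \<le> 1/8" using t gpos by (simp add: x_def field_simps)
  have "t * ((4/3) * (K * dl / g' + K * (t * (K * dl)) / g'^2)) = (4/3) * (8/7 * x + 64/49 * x^2) * dl"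
    unfolding x_def g'_def using gpos by (simp add: field_simps power2_eq_square)
  also have "\<dots> \<le> (4/3) * (8/7 * (1/8) + 64/49 * (1/8)^2) * dl"
    using x0 x1 dl(1) by (intro mult_right_mono mult_left_mono add_mono power_mono) auto
  also have "\<dots> = (32/147) * dl" by (simp add: power2_eq_square)
  also have "\<dots> \<le> dl / 2" using dl(1) by simp
  finally have "t * \<bar>Bop u p / (- d s + t * Bop u s + d p) - Bop w p / (- d s + t * Bop w s + d p)\<bar> \<le> dl / 2"
    using h by linarith
  moreover have "F t u p - F t w p = t * (Bop u p / (- d s + t * Bop u s + d p) - Bop w p / (- d s + t * Bop w s + d p))"
    using p by (simp add: F_def algebra_simps)
  ultimately show ?thesis using t by (simp add: abs_mult)
qed

lemma exists_fix:
  assumes t: "0 < t" "t * K \<le> g / 8"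
  shows "\<exists>u\<in>U. F t u = u"
proof -
  define u0 where "u0 = (\<lambda>p. if p = s then 1 else (0::real))"
  have u0U: "u0 \<in> U" using sI by (auto simp: U_def u0_def)
  define sq where "sq k = ((F t)^^k) u0" for k
  have inU: "sq k \<in> U" for k
    by (induction k) (simp_all add: sq_def u0U F_U[OF t])
  have sqS: "sq (Suc k) = F t (sq k)" for k by (simp add: sq_def)
  have bU: "\<bar>v q\<bar> \<le> (1::real)" if "v \<in> U" for v q
    using that by (cases "q \<in> I") (auto simp: U_def)
  have step: "\<bar>sq (Suc k) q - sq k q\<bar> \<le> 2 * (1/2)^k" for k q
  proof (induction k arbitrary: q)
    case 0
    show ?case using bU[OF inU, of 1 q] bU[OF inU, of 0 q] by simp
  next
    case (Suc k)
    have "\<bar>F t (sq (Suc k)) q - F t (sq k) q\<bar> \<le> 2 * (1/2)^k / 2"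
      by (rule F_contr[OF t inU inU]) (use Suc in auto)
    then show ?case by (simp add: sqS)
  qed
  have cau: "\<bar>sq (k + j) q - sq k q\<bar> \<le> 4 * (1/2)^k - 4 * (1/2)^(k+j)" for k j q
  proof (induction j)
    case 0 then show ?case by simp
  next
    case (Suc j)
    have "\<bar>sq (k + Suc j) q - sq k q\<bar> \<le> \<bar>sq (Suc (k + j)) q - sq (k + j) q\<bar> + \<bar>sq (k + j) q - sq k q\<bar>"
      by simp
    also have "\<dots> \<le> 2 * (1/2)^(k+j) + (4 * (1/2)^k - 4 * (1/2)^(k+j))"
      using step Suc by (intro add_mono) auto
    also have "\<dots> = 4 * (1/2)^k - 4 * (1/2)^(k + Suc j)" by simp
    finally show ?case .
  qed
  have cau2: "\<bar>sq m q - sq k q\<bar> \<le> 4 * (1/2)^k" if "k \<le> m" for k m q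
  proof -
    define j where "j = m - k"
    have m: "m = k + j" using that by (simp add: j_def)
    have "0 \<le> 4 * (1/2::real)^(k+j)" by simp
    then show ?thesis using cau[of k j q] unfolding m by linarith
  qed
  have conv: "convergent (\<lambda>k. sq k q)" for q
  proof -
    have "Cauchy (\<lambda>k. sq k q)"
    proof (rule metric_CauchyI)
      fix e :: real assume e: "0 < e"
      have "(\<lambda>k. 8 * (1/2::real)^k) \<longlonglongrightarrow> 8 * 0"
        by (intro tendsto_mult tendsto_const LIMSEQ_power_zero) auto
      then have "eventually (\<lambda>k. 8 * (1/2::real)^k < e) sequentially"
        using e by (simp add: order_tendsto_iff)
      then obtain M where M: "8 * (1/2::real)^M < e" by (auto simp: eventually_sequentially)
      show "\<exists>M. \<forall>m\<ge>M. \<forall>n\<ge>M. dist (sq m q) (sq n q) < e"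
      proof (intro exI allI impI)
        fix m n assume "M \<le> m" "M \<le> n"
        then have "\<bar>sq m q - sq M q\<bar> \<le> 4 * (1/2)^M" "\<bar>sq n q - sq M q\<bar> \<le> 4 * (1/2)^M"
          using cau2 by auto
        then show "dist (sq m q) (sq n q) < e" using M by (simp add: dist_real_def)
      qed
    qed
    then show ?thesis by (simp add: Cauchy_convergent_iff)
  qed
  define us where "us q = lim (\<lambda>k. sq k q)" for q
  have lim: "(\<lambda>k. sq k q) \<longlonglongrightarrow> us q" for q
    using conv[of q] by (simp add: us_def convergent_LIMSEQ_iff)
  have dist_us: "\<bar>us q - sq k q\<bar> \<le> 4 * (1/2)^k" for q k
  proof (rule LIMSEQ_le_const2)
    show "(\<lambda>m. \<bar>sq m q - sq k q\<bar>) \<longlonglongrightarrow> \<bar>us q - sq k q\<bar>"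
      by (intro tendsto_rabs tendsto_diff lim tendsto_const)
    show "\<exists>N. \<forall>n\<ge>N. \<bar>sq n q - sq k q\<bar> \<le> 4 * (1/2)^k" using cau2 by blast
  qed
  have usU: "us \<in> U"
  proof -
    have "us s = 1"
    proof -
      have "(\<lambda>k. sq k s) = (\<lambda>k. 1)" using inU by (auto simp: U_def)
      then show ?thesis using lim[of s] LIMSEQ_unique tendsto_const by metis
    qed
    moreover have "us p = 0" if "p \<notin> I" for p
    proof -
      have "(\<lambda>k. sq k p) = (\<lambda>k. 0)" using inU that by (auto simp: U_def)
      then show ?thesis using lim[of p] LIMSEQ_unique tendsto_const by metis
    qed
    moreover have "\<bar>us p\<bar> \<le> 1" for p
    proof (rule LIMSEQ_le_const2)
      show "(\<lambda>k. \<bar>sq k p\<bar>) \<longlonglongrightarrow> \<bar>us p\<bar>" by (intro tendsto_rabs lim)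
      show "\<exists>N. \<forall>n\<ge>N. \<bar>sq n p\<bar> \<le> 1" using bU[OF inU] by blast
    qed
    ultimately show ?thesis by (auto simp: U_def)
  qed
  have "F t us p = us p" for p
  proof (rule zero_if_le_geom[where C = 4, THEN eq_iff_diff_eq_0[THEN iffD2]])
    fix k :: nat
    have "\<bar>F t us p - F t (sq k) p\<bar> \<le> 4 * (1/2)^k / 2"
      by (rule F_contr[OF t usU inU]) (use dist_us in auto)
    moreover have "\<bar>sq (Suc k) p - us p\<bar> \<le> 4 * (1/2)^(Suc k)"
      using dist_us[of p "Suc k"] by (simp add: abs_minus_commute)
    ultimately show "\<bar>F t us p - us p\<bar> \<le> 4 * (1/2)^k"
      unfolding sqS by simp
  qed
  then show ?thesis using usU by blast
qed


end


context pert begin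

definition Aop where "Aop t v p = t * Bop v p - d p * v p"

lemma Bop_scale: "Bop (\<lambda>q. c * v q) p = c * Bop v p"
  unfolding Bop_def by (simp add: sum_distrib_left mult_ac)

lemma Aop_scale: "Aop t (\<lambda>q. c * v q) p = c * Aop t v p"
  unfolding Aop_def Bop_scale by (simp add: algebra_simps)

lemma Aop_rep: "p \<in> I \<Longrightarrow> Aop t v p = (\<Sum>q\<in>I. (t * b p q - (if p = q then d p else 0)) * v q)"
proof -
  assume p: "p \<in> I"
  have "(\<Sum>q\<in>I. (t * b p q - (if p = q then d p else 0)) * v q)
       = (\<Sum>q\<in>I. t * (b p q * v q) - (if p = q then d p * v q else 0))"
    by (rule sum.cong) (auto simp: algebra_simps)
  also have "\<dots> = t * Bop v p - d p * v p"
    unfolding Bop_def sum_subtractf sum_distrib_left using p finI by (simp add: sum.delta)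
  finally show ?thesis by (simp add: Aop_def)
qed

lemma eig_fin: "finite {ev. is_eigenvalue_on I (Aop t) ev}"
  by (rule eig_finite[OF finI]) (rule Aop_rep)

lemma main_loc:
  assumes t: "0 < t" "t * K \<le> g / 8"
  defines "em \<equiv> largest_eigenvalue I (Aop t)"
  shows "is_eigenvalue_on I (Aop t) em"
    and "\<bar>em - (- d s + t * b s s + t^2 * (\<Sum>q\<in>I-{s}. b s q * b q s / (d q - d s)))\<bar> \<le> 4 * K^3 / g^2 * t^3"
    and "\<exists>W. (\<forall>p. p \<notin> I \<longrightarrow> W p = 0) \<and> sqrt (\<Sum>p\<in>I. (W p)^2) = 1 \<and> (\<forall>p\<in>I. Aop t W p = em * W p) \<and>
          (\<forall>p\<in>I. \<bar>W p - (if p = s then 1 else t * b p s / (d p - d s))\<bar> \<le> (4 * K^2 / g^2 + real (card I) * (4 * K^2 / g^2)) * t^2)"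
proof -
  define SS where "SS = {ev. is_eigenvalue_on I (Aop t) ev}"
  have fin: "finite SS" unfolding SS_def by (rule eig_fin)
  obtain us where usU: "us \<in> U" and fx: "F t us = us" using exists_fix[OF t] by blast
  define es where "es = - d s + t * Bop us s"
  have es_lb: "- d s - t * K \<le> es" using U_bound[OF t(1) usU sI] unfolding es_def by linarith
  have "is_eigenvalue_on I (Aop t) es"
    unfolding is_eigenvalue_on_def
  proof (intro exI conjI)
    show "\<forall>x. x \<notin> I \<longrightarrow> us x = 0" using usU by (auto simp: U_def)
    show "\<exists>x\<in>I. us x \<noteq> 0" using usU sI by (intro bexI[of _ s]) (auto simp: U_def)
    show "\<forall>x\<in>I. Aop t us x = es * us x"
    proof
      fix p assume p: "p \<in> I"
      show "Aop t us p = es * us p"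
      proof (cases "p = s")
        case True then show ?thesis using usU by (simp add: Aop_def es_def U_def)
      next
        case False
        have pos: "0 < es + d p" using gap[OF p False] es_lb t gpos by linarith
        have "us p = t * Bop us p / (es + d p)"
          using fun_cong[OF fx, of p] p False by (simp add: F_def es_def add_ac)
        then have "t * Bop us p = (es + d p) * us p" using pos by (simp add: field_simps)
        then show ?thesis by (simp add: Aop_def algebra_simps)
      qed
    qed
  qed
  then have esS: "es \<in> SS" by (simp add: SS_def)
  have emS: "em \<in> SS" unfolding em_def largest_eigenvalue_def SS_def[symmetric]
    using Max_in[OF fin] esS by blast
  then show eig: "is_eigenvalue_on I (Aop t) em" by (simp add: SS_def)
  have es_em: "es \<le> em" unfolding em_def largest_eigenvalue_def SS_def[symmetric]
    using Max_ge[OF fin esS] .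
  obtain v where v0: "\<forall>x. x \<notin> I \<longrightarrow> v x = 0" and vnz: "\<exists>x\<in>I. v x \<noteq> 0"
    and ve: "\<forall>x\<in>I. Aop t v x = em * v x"
    using eig unfolding is_eigenvalue_on_def by blast
  define M where "M = Max ((\<lambda>p. \<bar>v p\<bar>) ` I)"
  have Mge: "\<bar>v p\<bar> \<le> M" if "p \<in> I" for p using finI that by (simp add: M_def)
  obtain q where q: "q \<in> I" "\<bar>v q\<bar> = M"
  proof -
    have "M \<in> (\<lambda>p. \<bar>v p\<bar>) ` I" unfolding M_def using finI sI by (intro Max_in) auto
    then show ?thesis using that by blast
  qed
  have Mpos: "0 < M" using vnz Mge by force
  have qs: "q = s"
  proof (rule ccontr)
    assume qs: "q \<noteq> s"
    have "\<bar>t * Bop v q\<bar> \<le> t * (K * M)" using Bop_bound[of v M q] Mge q t by (simp add: abs_mult)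
    also have "\<dots> \<le> g / 8 * M" using t Mpos by (simp add: mult.assoc[symmetric])
    finally have h1: "\<bar>t * Bop v q\<bar> \<le> g / 8 * M" .
    have a: "7 * g / 8 \<le> em + d q" using gap[OF q(1) qs] es_lb es_em t by linarith
    have "t * Bop v q = (em + d q) * v q" using ve q(1) by (simp add: Aop_def algebra_simps)
    then have "\<bar>t * Bop v q\<bar> = (em + d q) * M" using a gpos q(2) by (simp add: abs_mult)
    moreover have "7 * g / 8 * M \<le> (em + d q) * M" using a Mpos by (intro mult_right_mono) auto
    moreover have "7 * g / 8 * M = 7/8 * (g*M)" "g / 8 * M = 1/8 * (g*M)" by simp_all
    moreover have "0 < g * M" using gpos Mpos by simp
    ultimately show False using h1 by linarith
  qed
  define c where "c = inverse (v s)"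
  have vs0: "v s \<noteq> 0" using q qs Mpos by auto
  define u where "u = (\<lambda>p. c * v p)"
  have u1: "u s = 1" using vs0 by (simp add: u_def c_def)
  have ub: "\<bar>u p\<bar> \<le> 1" if "p \<in> I" for p
  proof -
    have "\<bar>u p\<bar> = \<bar>v p\<bar> / \<bar>v s\<bar>" by (simp add: u_def c_def abs_mult field_simps)
    also have "\<dots> \<le> 1" using Mge[OF that] q qs vs0 by simp
    finally show ?thesis .
  qed
  have u0: "\<forall>x. x \<notin> I \<longrightarrow> u x = 0" using v0 by (simp add: u_def)
  have ue: "Aop t u p = em * u p" if "p \<in> I" for p
    using ve that unfolding u_def Aop_scale by simp
  have eqs: "em = - d s + t * Bop u s" using ue[OF sI] u1 by (simp add: Aop_def)
  have eqp: "t * Bop u p - d p * u p = em * u p" if "p \<in> I" "p \<noteq> s" for p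
    using ue[OF that(1)] by (simp add: Aop_def)
  note A = analyze[OF t u1 ub eqs eqp]
  show "\<bar>em - (- d s + t * b s s + t^2 * (\<Sum>q\<in>I-{s}. b s q * b q s / (d q - d s)))\<bar> \<le> 4 * K^3 / g^2 * t^3"
    by (rule A(3))
  define eps where "eps = 2 * t * K / g"
  define Q where "Q = (\<Sum>p\<in>I. (u p)^2)"
  have Qsplit: "Q = 1 + (\<Sum>p\<in>I-{s}. (u p)^2)" unfolding Q_def using sum.remove[OF finI sI, of "\<lambda>p. (u p)^2"] u1 by simp
  have Q1: "1 \<le> Q" unfolding Qsplit by (simp add: sum_nonneg)
  have "(\<Sum>p\<in>I-{s}. (u p)^2) \<le> (\<Sum>p\<in>I-{s}. eps^2)"
  proof (rule sum_mono)
    fix p assume p: "p \<in> I - {s}"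
    have "\<bar>u p\<bar> \<le> eps" using A(1)[of p] p by (simp add: eps_def)
    then show "(u p)^2 \<le> eps^2" using power_mono[OF _ abs_ge_zero, of "u p" eps 2] by simp
  qed
  also have "\<dots> = real (card (I - {s})) * eps^2" by simp
  also have "\<dots> \<le> real (card I) * eps^2"
    using card_mono[OF finI, of "I - {s}"] by (intro mult_right_mono) auto
  finally have Qub: "Q - 1 \<le> real (card I) * (4 * K^2 / g^2) * t^2"
    unfolding Qsplit eps_def by (simp add: power2_eq_square field_simps)
  define r where "r = sqrt Q"
  have r1: "1 \<le> r" using Q1 by (simp add: r_def)
  have rQ: "r^2 = Q" using Q1 by (simp add: r_def)
  define W where "W = (\<lambda>p. inverse r * u p)"
  show "\<exists>W. (\<forall>p. p \<notin> I \<longrightarrow> W p = 0) \<and> sqrt (\<Sum>p\<in>I. (W p)^2) = 1 \<and> (\<forall>p\<in>I. Aop t W p = em * W p) \<and>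
          (\<forall>p\<in>I. \<bar>W p - (if p = s then 1 else t * b p s / (d p - d s))\<bar> \<le> (4 * K^2 / g^2 + real (card I) * (4 * K^2 / g^2)) * t^2)"
  proof (intro exI[of _ W] conjI ballI allI impI)
    fix p assume "p \<notin> I" then show "W p = 0" using u0 by (simp add: W_def)
  next
    have "(\<Sum>p\<in>I. (W p)^2) = (\<Sum>p\<in>I. (u p)^2) / r^2"
      unfolding W_def by (simp add: power_mult_distrib sum_divide_distrib field_simps)
    also have "\<dots> = 1" using rQ Q1 by (simp add: Q_def)
    finally show "sqrt (\<Sum>p\<in>I. (W p)^2) = 1" by simp
  next
    fix p assume "p \<in> I" then show "Aop t W p = em * W p"
      unfolding W_def Aop_scale using ue by simp
  next
    fix p assume p: "p \<in> I"
    have "W p - u p = - (u p * ((r - 1) / r))" using r1 by (simp add: W_def field_simps)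
    moreover have "\<bar>(r - 1) / r\<bar> = (r - 1) / r" using r1 by simp
    ultimately have "\<bar>W p - u p\<bar> = \<bar>u p\<bar> * ((r - 1) / r)" by (simp only: abs_minus_cancel abs_mult)
    also have "\<dots> \<le> 1 * ((r - 1) / r)" using ub[OF p] r1 by (intro mult_right_mono) auto
    also have "\<dots> \<le> r - 1"
    proof -
      have "(r - 1) / r \<le> (r - 1) / 1" using r1 by (intro divide_left_mono) auto
      then show ?thesis by simp
    qed
    also have "\<dots> \<le> r^2 - 1" proof -
      have "r * 1 \<le> r * r" using r1 by (intro mult_left_mono) auto
      then show ?thesis by (simp add: power2_eq_square)
    qed
    also have "\<dots> \<le> real (card I) * (4 * K^2 / g^2) * t^2" using rQ Qub by simp
    finally have h: "\<bar>W p - u p\<bar> \<le> real (card I) * (4 * K^2 / g^2) * t^2" .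
    show "\<bar>W p - (if p = s then 1 else t * b p s / (d p - d s))\<bar> \<le> (4 * K^2 / g^2 + real (card I) * (4 * K^2 / g^2)) * t^2"
    proof (cases "p = s")
      case True
      have "0 \<le> 4 * K^2 / g^2 * t^2" by simp
      moreover have e: "(if p = s then 1 else t * b p s / (d p - d s)) = u p" using True u1 by simp
      ultimately show ?thesis using h unfolding e distrib_right by linarith
    next
      case False
      have "\<bar>W p - t * b p s / (d p - d s)\<bar> \<le> \<bar>W p - u p\<bar> + \<bar>u p - t * b p s / (d p - d s)\<bar>" using abs_triangle_ineq[of "W p - u p" "u p - t * b p s / (d p - d s)"] by simp
      moreover have e: "(if p = s then 1 else t * b p s / (d p - d s)) = t * b p s / (d p - d s)" using False by simp
      moreover have a2: "\<bar>u p - t * b p s / (d p - d s)\<bar> \<le> 4 * K^2 / g^2 * t^2" using A(2)[of p] p False by blast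
      ultimately have "\<bar>W p - t * b p s / (d p - d s)\<bar> \<le> real (card I) * (4 * K^2 / g^2) * t^2 + 4 * K^2 / g^2 * t^2"
        using h by (meson add_mono order_trans)
      then show ?thesis unfolding e by (simp add: algebra_simps)
    qed
  qed
qed

end


lemma entry_add: "entry (\<lambda>x. v x + w x) j l = entry v j l + entry w j l"
  by (simp add: entry_def)
lemma entry_scale: "entry (\<lambda>x. c * v x) j l = c * entry v j l"
  by (simp add: entry_def)

lemma Theta1_add: "Theta1 N G (\<lambda>x. v x + w x) = (\<lambda>x. Theta1 N G v x + Theta1 N G w x)"
proof (rule ext, clarify)
  fix j l
  show "Theta1 N G (\<lambda>x. v x + w x) (j, l) = Theta1 N G v (j, l) + Theta1 N G w (j, l)"
    unfolding Theta1_def entry_add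
    by (simp add: sum.distrib[symmetric] algebra_simps)
qed

lemma Theta1_scale: "Theta1 N G (\<lambda>x. c * v x) = (\<lambda>x. c * Theta1 N G v x)"
proof (rule ext, clarify)
  fix j l
  show "Theta1 N G (\<lambda>x. c * v x) (j, l) = c * Theta1 N G v (j, l)"
    unfolding Theta1_def entry_scale
    by (simp add: sum_distrib_left algebra_simps)
qed

lemma finite_Tset: "finite (Tset N)"
proof -
  have "Tset N \<subseteq> {..<N} \<times> {..<N}" by (auto simp: Tset_def)
  then show ?thesis by (rule finite_subset) auto
qed

lemma Theta1_rep: "\<forall>x. x \<notin> Tset N \<longrightarrow> S x = 0 \<Longrightarrow>
   Theta1 N G S p = (\<Sum>q\<in>Tset N. S q * Theta1 N G (\<lambda>x. if x = q then 1 else 0) p)"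
  by (rule lin_rep[OF finite_Tset Theta1_add Theta1_scale])

lemma Theta1_col:
  assumes jl: "(j, l) \<in> Tset N"
  shows "Theta1 N G (\<lambda>x. if x = (js, js) then 1 else 0) (j, l) =
    (if j = js \<and> l = js then -2 * (\<Sum>n\<in>{..<N}-{js}. G js n)
     else if j = js then 2 * G js l else if l = js then 2 * G j js else 0)"
proof -
  have jl': "j \<le> l" "l < N" using jl by (auto simp: Tset_def)
  show ?thesis
  proof (cases "j = js \<and> l = js")
    case True
    have "(\<Sum>n\<in>{..<N}-{j,l}. G l n * (entry (\<lambda>x. if x = (js, js) then 1 else 0) j n - entry (\<lambda>x. if x = (js, js) then 1 else 0) j l)
          + G j n * (entry (\<lambda>x. if x = (js, js) then 1 else 0) n l - entry (\<lambda>x. if x = (js, js) then 1 else 0) j l))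
          = (\<Sum>n\<in>{..<N}-{js}. -2 * G js n)"
      using True by (intro sum.cong) (auto simp: entry_def)
    then show ?thesis using jl True by (simp add: Theta1_def entry_def sum_distrib_left)
  next
    case False
    have "(\<Sum>n\<in>{..<N}-{j,l}. G l n * (entry (\<lambda>x. if x = (js, js) then 1 else 0) j n - entry (\<lambda>x. if x = (js, js) then 1 else 0) j l)
          + G j n * (entry (\<lambda>x. if x = (js, js) then 1 else 0) n l - entry (\<lambda>x. if x = (js, js) then 1 else 0) j l))
          = 0"
      using False by (intro sum.neutral) (auto simp: entry_def)
    then show ?thesis using jl False jl' by (auto simp: Theta1_def entry_def)
  qed
qed

lemma Theta1_row:
  assumes ab: "(a, b) \<in> Tset N" and ns: "(a, b) \<noteq> (js, js)" and js: "js < N"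
  shows "Theta1 N G (\<lambda>x. if x = (a, b) then 1 else 0) (js, js) =
    (if a = js then 2 * G js b else if b = js then 2 * G js a else 0)"
proof -
  have ab': "a \<le> b" "b < N" using ab by (auto simp: Tset_def)
  define E where "E = entry (\<lambda>x. if x = (a, b) then 1 else 0)"
  have Ejj: "E js js = 0" using ns by (auto simp: E_def entry_def)
  have "Theta1 N G (\<lambda>x. if x = (a, b) then 1 else 0) (js, js) =
        (\<Sum>n\<in>{..<N}-{js}. G js n * (E js n - E js js) + G js n * (E n js - E js js))"
    using js by (simp add: Theta1_def Tset_def E_def)
  also have "\<dots> = (\<Sum>n\<in>{..<N}-{js}. if n = (if a = js then b else a) then (if a = js \<or> b = js then 2 * G js n else 0) else 0)"
    using ab' ns by (intro sum.cong) (auto simp: Ejj E_def entry_def)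
  also have "\<dots> = (if a = js then 2 * G js b else if b = js then 2 * G js a else 0)"
    using ab' ns by (auto simp: sum.delta)
  finally show ?thesis .
qed



lemma pert_inst:
  assumes "finite I" "s \<in> I" "\<forall>p\<in>I. p \<noteq> s \<longrightarrow> d s < d p"
  shows "pert I s b d (Min (insert 1 ((\<lambda>p. d p - d s) ` (I - {s})))) (1 + (\<Sum>p\<in>I. \<Sum>q\<in>I. \<bar>b p q\<bar>))"
proof
  show "finite I" "s \<in> I" by (rule assms(1), rule assms(2))
  show "0 < Min (insert 1 ((\<lambda>p. d p - d s) ` (I - {s})))"
    using assms by (subst Min_gr_iff) auto
  fix p
  show "p \<in> I \<Longrightarrow> p \<noteq> s \<Longrightarrow> d s + Min (insert 1 ((\<lambda>p. d p - d s) ` (I - {s}))) \<le> d p"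
  proof -
    assume "p \<in> I" "p \<noteq> s"
    then have "Min (insert 1 ((\<lambda>p. d p - d s) ` (I - {s}))) \<le> d p - d s"
      using assms(1) by (intro Min_le) auto
    then show ?thesis by simp
  qed
  have nn: "0 \<le> (\<Sum>p\<in>I. \<Sum>q\<in>I. \<bar>b p q\<bar>)" by (intro sum_nonneg) auto
  then show "0 < 1 + (\<Sum>p\<in>I. \<Sum>q\<in>I. \<bar>b p q\<bar>)" by simp
  assume p: "p \<in> I"
  have "(\<Sum>q\<in>I. \<bar>b p q\<bar>) \<le> (\<Sum>p\<in>I. \<Sum>q\<in>I. \<bar>b p q\<bar>)"
    using p assms(1) by (intro member_le_sum) (auto intro: sum_nonneg)
  then show "(\<Sum>q\<in>I. \<bar>b p q\<bar>) \<le> 1 + (\<Sum>p\<in>I. \<Sum>q\<in>I. \<bar>b p q\<bar>)" by simp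
qed



theorem mainTheorem10:
  fixes N :: nat and G :: "nat \<Rightarrow> nat \<Rightarrow> real" and Lam :: "nat \<Rightarrow> real" and js :: nat
  assumes "N \<ge> 2"
    and "rate_matrix N G" and "irreducible_rate N G"
    and "\<forall>j<N. Lam j \<ge> 0"
    and "js < N" and "\<forall>j<N. j \<noteq> js \<longrightarrow> Lam j > Lam js"
  shows
    "(\<exists>C>0. \<exists>\<delta>>0. \<forall>\<theta>. 0 < \<theta> \<and> \<theta> < \<delta> \<longrightarrow>
        \<bar>mu N G Lam \<theta> - (2 * Lam js + 2 * \<theta> * (\<Sum>j \<in> {..<N} - {js}. G j js)
           - 4 * \<theta>^2 * (\<Sum>j \<in> {..<N} - {js}. (G j js)^2 / (Lam j - Lam js)))\<bar> \<le> C * \<theta>^3)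
   \<and> (\<exists>C>0. \<exists>\<delta>>0. \<forall>\<theta>. 0 < \<theta> \<and> \<theta> < \<delta> \<longrightarrow>
        (\<exists>W :: nat \<times> nat \<Rightarrow> real.
           (\<forall>p. p \<notin> Tset N \<longrightarrow> W p = 0) \<and>
           sqrt (\<Sum>p \<in> Tset N. (W p)^2) = 1 \<and>
           (\<forall>p \<in> Tset N. \<theta> * Theta1 N G W p - Psi N Lam W p = - mu N G Lam \<theta> * W p) \<and>
           (\<forall>p \<in> Tset N. \<bar>W p - (W0 js p + \<theta> * W1 G Lam js p)\<bar> \<le> C * \<theta>^2)))
   \<and> (\<exists>C>0. \<exists>\<delta>>0. \<forall>\<theta>. 0 < \<theta> \<and> \<theta> < \<delta> \<longrightarrow>
        \<bar>mu N G Lam \<theta> - 2 * lam N G Lam \<theta>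
           - (- 2 * \<theta>^2 * (\<Sum>j \<in> {..<N} - {js}. (G j js)^2 / (Lam j - Lam js)))\<bar> \<le> C * \<theta>^3)
   \<and> (\<exists>\<delta>>0. \<forall>\<theta>. 0 < \<theta> \<and> \<theta> < \<delta> \<longrightarrow> mu N G Lam \<theta> - 2 * lam N G Lam \<theta> < 0)"
proof -
  note js = assms(5)
  have sym: "G j l = G l j" if "j < N" "l < N" for j l using assms(2) that by (auto simp: rate_matrix_def)
  have diag: "G js js = - (\<Sum>l\<in>{..<N}-{js}. G js l)" using assms(2) js by (auto simp: rate_matrix_def)
  define IT where "IT = Tset N"
  define sT where "sT = (js, js)"
  define bT where "bT = (\<lambda>p q. Theta1 N G (\<lambda>x. if x = q then 1 else 0) p)"
  define dT where "dT = (\<lambda>p::nat\<times>nat. Lam (fst p) + Lam (snd p))"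
  define gT where "gT = Min (insert 1 ((\<lambda>p. dT p - dT sT) ` (IT - {sT})))"
  define KT where "KT = 1 + (\<Sum>p\<in>IT. \<Sum>q\<in>IT. \<bar>bT p q\<bar>)"
  define gL where "gL = Min (insert 1 ((\<lambda>p. Lam p - Lam js) ` ({..<N} - {js})))"
  define KL where "KL = 1 + (\<Sum>p\<in>{..<N}. \<Sum>q\<in>{..<N}. \<bar>G p q\<bar>)"
  have finT: "finite IT" unfolding IT_def by (rule finite_Tset)
  have sTI: "sT \<in> IT" using js by (simp add: IT_def sT_def Tset_def)
  have gapT: "\<forall>p\<in>IT. p \<noteq> sT \<longrightarrow> dT sT < dT p"
  proof (intro ballI impI)
    fix p assume p: "p \<in> IT" "p \<noteq> sT"
    obtain j l where jl: "p = (j, l)" by (cases p)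
    have "j < N" "l < N" using p jl by (auto simp: IT_def Tset_def)
    then have "Lam js \<le> Lam j" "Lam js \<le> Lam l" "j \<noteq> js \<Longrightarrow> Lam js < Lam j" "l \<noteq> js \<Longrightarrow> Lam js < Lam l"
      using assms(6) by (auto simp: le_less)
    moreover have "j \<noteq> js \<or> l \<noteq> js" using p jl by (auto simp: sT_def)
    ultimately show "dT sT < dT p" unfolding dT_def sT_def jl by auto
  qed
  interpret T: pert IT sT bT dT gT KT
    unfolding gT_def KT_def by (rule pert_inst[OF finT sTI gapT])
  interpret L: pert "{..<N}" js G Lam gL KL
    unfolding gL_def KL_def by (rule pert_inst) (use js assms(6) in auto)
  define S where "S = (\<Sum>j\<in>{..<N} - {js}. (G j js)^2 / (Lam j - Lam js))"
  define ST where "ST = (\<Sum>j\<in>{..<N} - {js}. G j js)"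
  have ST': "(\<Sum>n\<in>{..<N}-{js}. G js n) = ST" unfolding ST_def using sym js by (intro sum.cong) auto
  have bss: "bT sT sT = -2 * ST"
    using Theta1_col[of js js N G js] sTI ST' by (simp add: bT_def sT_def IT_def)
  have GL: "G js js = - ST" using diag ST' by simp
  have sumL: "(\<Sum>q\<in>{..<N}-{js}. G js q * G q js / (Lam q - Lam js)) = S"
    unfolding S_def using sym js by (intro sum.cong) (auto simp: power2_eq_square)
  have sumT: "(\<Sum>q\<in>IT-{sT}. bT sT q * bT q sT / (dT q - dT sT)) = 4 * S"
  proof -
    define h where "h j = (min j js, max j js)" for j
    define f where "f q = bT sT q * bT q sT / (dT q - dT sT)" for q
    have inj: "inj_on h ({..<N}-{js})" by (auto simp: inj_on_def h_def min_def max_def split: if_splits)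
    have img: "h ` ({..<N}-{js}) \<subseteq> IT - {sT}" using js by (auto simp: h_def IT_def Tset_def sT_def)
    have zero: "f q = 0" if q: "q \<in> (IT - {sT}) - h ` ({..<N}-{js})" for q
    proof -
      obtain a b where ab: "q = (a, b)" by (cases q)
      have abT: "(a, b) \<in> Tset N" "a \<le> b" "b < N" using q ab by (auto simp: IT_def Tset_def)
      have "a \<noteq> js"
      proof
        assume "a = js"
        then have "b \<noteq> js" using q ab by (auto simp: sT_def)
        then have "q = h b" "b \<in> {..<N}-{js}" using abT ab \<open>a = js\<close> by (auto simp: h_def)
        then show False using q by blast
      qed
      moreover have "b \<noteq> js"
      proof
        assume "b = js"
        then have "q = h a" "a \<in> {..<N}-{js}" using abT ab \<open>a \<noteq> js\<close> by (auto simp: h_def)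
        then show False using q by blast
      qed
      ultimately have "bT q sT = 0" using Theta1_col[OF abT(1), of G js] by (simp add: bT_def ab sT_def)
      then show ?thesis by (simp add: f_def)
    qed
    have fh: "f (h j) = 4 * ((G j js)^2 / (Lam j - Lam js))" if j: "j \<in> {..<N}-{js}" for j
    proof (cases "j < js")
      case True
      have hj: "h j = (j, js)" using True by (simp add: h_def)
      have T1: "(j, js) \<in> Tset N" using True js by (simp add: Tset_def)
      have "bT sT (h j) = 2 * G js j" using Theta1_row[OF T1 _ js, of G] True by (simp add: hj bT_def sT_def)
      moreover have "bT (h j) sT = 2 * G j js" using Theta1_col[OF T1, of G js] True by (simp add: hj bT_def sT_def)
      ultimately show ?thesis using sym[of j js] j js by (simp add: f_def hj dT_def sT_def power2_eq_square)
    next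
      case False
      then have Fj: "js < j" using j by auto
      have hj: "h j = (js, j)" using Fj by (simp add: h_def)
      have T1: "(js, j) \<in> Tset N" using Fj j by (simp add: Tset_def)
      have "bT sT (h j) = 2 * G js j" using Theta1_row[OF T1 _ js, of G] Fj by (simp add: hj bT_def sT_def)
      moreover have "bT (h j) sT = 2 * G js j" using Theta1_col[OF T1, of G js] Fj by (simp add: hj bT_def sT_def)
      ultimately show ?thesis using sym[of j js] j js by (simp add: f_def hj dT_def sT_def power2_eq_square)
    qed
    have "(\<Sum>q\<in>IT-{sT}. f q) = (\<Sum>q\<in>h ` ({..<N}-{js}). f q)"
      by (rule sum.mono_neutral_right) (use finT img zero in auto)
    also have "\<dots> = (\<Sum>j\<in>{..<N}-{js}. f (h j))" by (rule sum.reindex[OF inj, unfolded comp_def])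
    also have "\<dots> = (\<Sum>j\<in>{..<N}-{js}. 4 * ((G j js)^2 / (Lam j - Lam js)))" by (rule sum.cong) (use fh in auto)
    also have "\<dots> = 4 * S" by (simp add: S_def sum_distrib_left)
    finally show ?thesis by (simp add: f_def)
  qed
  have opT: "(\<lambda>S p. \<theta> * Theta1 N G S p - Psi N Lam S p) S p = T.Aop \<theta> S p"
    if "\<forall>x. x \<notin> IT \<longrightarrow> S x = 0" "p \<in> IT" for \<theta> S p
  proof -
    obtain j l where jl: "p = (j, l)" by (cases p)
    have e: "T.Bop S p = (\<Sum>q\<in>IT. bT p q * S q)" by (rule T.Bop_def)
    have "Theta1 N G S p = (\<Sum>q\<in>IT. bT p q * S q)"
      unfolding bT_def using Theta1_rep[of N S G p] that(1) by (simp add: IT_def mult.commute)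
    then have "Theta1 N G S p = T.Bop S p" using e by simp
    moreover have "Psi N Lam S p = dT p * S p" using that(2) jl by (simp add: Psi_def dT_def IT_def)
    ultimately show ?thesis by (simp add: T.Aop_def)
  qed
  have eigT: "is_eigenvalue_on IT (\<lambda>S p. \<theta> * Theta1 N G S p - Psi N Lam S p) = is_eigenvalue_on IT (T.Aop \<theta>)" for \<theta>
    by (rule eig_cong) (rule opT)
  have muE: "mu N G Lam \<theta> = - largest_eigenvalue IT (T.Aop \<theta>)" for \<theta>
    unfolding mu_def largest_eigenvalue_def IT_def[symmetric] eigT ..
  have lamE: "lam N G Lam \<theta> = - largest_eigenvalue {..<N} (L.Aop \<theta>)" for \<theta>
  proof -
    have "(\<lambda>v j. \<theta> * (\<Sum>l<N. G j l * v l) - Lam j * v j) = L.Aop \<theta>"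
      by (intro ext) (simp add: L.Aop_def L.Bop_def)
    then show ?thesis by (simp add: lam_def)
  qed
  define \<delta>0 where "\<delta>0 = min (gT / (8 * KT)) (gL / (8 * KL))"
  have d0: "0 < \<delta>0" using T.gpos T.Kpos L.gpos L.Kpos by (simp add: \<delta>0_def)
  have tcT: "\<theta> * KT \<le> gT / 8" if "\<theta> < \<delta>0" for \<theta>
  proof -
    have "\<theta> \<le> gT / (8 * KT)" using that by (simp add: \<delta>0_def)
    then show ?thesis using T.Kpos by (simp add: field_simps)
  qed
  have tcL: "\<theta> * KL \<le> gL / 8" if "\<theta> < \<delta>0" for \<theta>
  proof -
    have "\<theta> \<le> gL / (8 * KL)" using that by (simp add: \<delta>0_def)
    then show ?thesis using L.Kpos by (simp add: field_simps)
  qed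
  define CT where "CT = 4 * KT^3 / gT^2"
  define CL where "CL = 4 * KL^3 / gL^2"
  have CT0: "0 \<le> CT" using T.Kpos by (simp add: CT_def)
  have CL0: "0 \<le> CL" using L.Kpos by (simp add: CL_def)
  have estT: "\<bar>largest_eigenvalue IT (T.Aop \<theta>) - (- 2 * Lam js - 2 * \<theta> * ST + 4 * \<theta>^2 * S)\<bar> \<le> CT * \<theta>^3"
    if "0 < \<theta>" "\<theta> < \<delta>0" for \<theta>
    using T.main_loc(2)[OF that(1) tcT[OF that(2)]] unfolding sumT bss CT_def
    by (simp add: dT_def sT_def algebra_simps)
  have estL: "\<bar>largest_eigenvalue {..<N} (L.Aop \<theta>) - (- Lam js - \<theta> * ST + \<theta>^2 * S)\<bar> \<le> CL * \<theta>^3"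
    if "0 < \<theta>" "\<theta> < \<delta>0" for \<theta>
    using L.main_loc(2)[OF that(1) tcL[OF that(2)]] unfolding sumL GL CL_def
    by (simp add: algebra_simps)
  have c1: "\<bar>mu N G Lam \<theta> - (2 * Lam js + 2 * \<theta> * ST - 4 * \<theta>^2 * S)\<bar> \<le> CT * \<theta>^3"
    if "0 < \<theta>" "\<theta> < \<delta>0" for \<theta>
  proof -
    have "mu N G Lam \<theta> - (2 * Lam js + 2 * \<theta> * ST - 4 * \<theta>^2 * S)
          = - (largest_eigenvalue IT (T.Aop \<theta>) - (- 2 * Lam js - 2 * \<theta> * ST + 4 * \<theta>^2 * S))"
      by (simp add: muE)
    then show ?thesis using estT[OF that] by (simp only: abs_minus_cancel)
  qed
  have c3: "\<bar>mu N G Lam \<theta> - 2 * lam N G Lam \<theta> - (- 2 * \<theta>^2 * S)\<bar> \<le> (CT + 2 * CL) * \<theta>^3"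
    if "0 < \<theta>" "\<theta> < \<delta>0" for \<theta>
  proof -
    have "mu N G Lam \<theta> - 2 * lam N G Lam \<theta> - (- 2 * \<theta>^2 * S)
          = - (largest_eigenvalue IT (T.Aop \<theta>) - (- 2 * Lam js - 2 * \<theta> * ST + 4 * \<theta>^2 * S))
            + 2 * (largest_eigenvalue {..<N} (L.Aop \<theta>) - (- Lam js - \<theta> * ST + \<theta>^2 * S))"
      by (simp add: muE lamE algebra_simps)
    then show ?thesis using estT[OF that] estL[OF that] by (simp add: abs_le_iff algebra_simps)
  qed
  have apx: "W0 js p + \<theta> * W1 G Lam js p = (if p = sT then 1 else \<theta> * bT p sT / (dT p - dT sT))"
    if p: "p \<in> IT" for p \<theta>
  proof -
    obtain j l where jl: "p = (j, l)" by (cases p)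
    have T1: "(j, l) \<in> Tset N" using p jl by (simp add: IT_def)
    then have jl': "j \<le> l" "l < N" by (auto simp: Tset_def)
    show ?thesis
    proof (cases "p = sT")
      case True then show ?thesis by (simp add: sT_def W0_def W1_def)
    next
      case False
      then have ne: "\<not> (j = js \<and> l = js)" using jl by (simp add: sT_def)
      have col: "bT p sT = (if j = js then 2 * G js l else if l = js then 2 * G j js else 0)"
        using Theta1_col[OF T1, of G js] ne by (simp add: bT_def sT_def jl)
      show ?thesis
      proof (cases "j = js")
        case True
        then have "js < l" using ne jl' by auto
        then show ?thesis using True False col by (simp add: jl W0_def W1_def dT_def sT_def)
      next
        case F2: False
        show ?thesis
        proof (cases "l = js")
          case True
          then have "j < js" using F2 jl' by auto
          then show ?thesis using True F2 False col by (simp add: jl W0_def W1_def dT_def sT_def)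
        next
          case False
          then show ?thesis using F2 \<open>p \<noteq> sT\<close> col by (simp add: jl W0_def W1_def sT_def)
        qed
      qed
    qed
  qed
  have Spos: "0 < S"
  proof -
    define l where "l = (if js = 0 then 1 else 0::nat)"
    have l: "l < N" "l \<noteq> js" using assms(1) by (auto simp: l_def)
    define R where "R = {(a, b). a < N \<and> b < N \<and> a \<noteq> b \<and> G a b > 0}"
    have "(js, l) \<in> R\<^sup>*" using assms(3) js l unfolding irreducible_rate_def R_def by blast
    then obtain y where y: "(js, y) \<in> R"
      using l(2) by (cases rule: converse_rtranclE) auto
    then have y': "y < N" "y \<noteq> js" "G js y > 0" by (auto simp: R_def)
    have tpos: "0 < (G y js)^2 / (Lam y - Lam js)"
      using y' sym[of y js] js assms(6) by simp
    have "(G y js)^2 / (Lam y - Lam js) \<le> S"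
      unfolding S_def using y' assms(6)
      by (intro member_le_sum) (auto intro!: divide_nonneg_pos)
    then show ?thesis using tpos by linarith
  qed
  have CT1: "0 < CT + 1" using CT0 by simp
  have cl1: "\<exists>C>0. \<exists>\<delta>>0. \<forall>\<theta>. 0 < \<theta> \<and> \<theta> < \<delta> \<longrightarrow>
        \<bar>mu N G Lam \<theta> - (2 * Lam js + 2 * \<theta> * (\<Sum>j \<in> {..<N} - {js}. G j js)
           - 4 * \<theta>^2 * (\<Sum>j \<in> {..<N} - {js}. (G j js)^2 / (Lam j - Lam js)))\<bar> \<le> C * \<theta>^3"
    unfolding ST_def[symmetric] S_def[symmetric]
  proof (rule exI[of _ "CT+1"], rule conjI[OF CT1], rule exI[of _ \<delta>0], rule conjI[OF d0], intro allI impI)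
    fix \<theta> :: real assume th: "0 < \<theta> \<and> \<theta> < \<delta>0"
    have "CT * \<theta>^3 \<le> (CT + 1) * \<theta>^3" using th by (intro mult_right_mono) auto
    then show "\<bar>mu N G Lam \<theta> - (2 * Lam js + 2 * \<theta> * ST - 4 * \<theta>^2 * S)\<bar> \<le> (CT + 1) * \<theta>^3"
      using c1[of \<theta>] th by linarith
  qed
  define C2 where "C2 = 4 * KT^2 / gT^2 + real (card IT) * (4 * KT^2 / gT^2)"
  have "0 \<le> C2" unfolding C2_def by (intro add_nonneg_nonneg mult_nonneg_nonneg) auto
  then have C21: "0 < C2 + 1" by simp
  have cl2: "\<exists>C>0. \<exists>\<delta>>0. \<forall>\<theta>. 0 < \<theta> \<and> \<theta> < \<delta> \<longrightarrow>
        (\<exists>W :: nat \<times> nat \<Rightarrow> real.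
           (\<forall>p. p \<notin> Tset N \<longrightarrow> W p = 0) \<and>
           sqrt (\<Sum>p \<in> Tset N. (W p)^2) = 1 \<and>
           (\<forall>p \<in> Tset N. \<theta> * Theta1 N G W p - Psi N Lam W p = - mu N G Lam \<theta> * W p) \<and>
           (\<forall>p \<in> Tset N. \<bar>W p - (W0 js p + \<theta> * W1 G Lam js p)\<bar> \<le> C * \<theta>^2))"
  proof (rule exI[of _ "C2+1"], rule conjI[OF C21], rule exI[of _ \<delta>0], rule conjI[OF d0], intro allI impI)
    fix \<theta> :: real assume th: "0 < \<theta> \<and> \<theta> < \<delta>0"
    obtain W where W0': "\<forall>p. p \<notin> IT \<longrightarrow> W p = 0" and W1': "sqrt (\<Sum>p\<in>IT. (W p)^2) = 1"
      and W2: "\<forall>p\<in>IT. T.Aop \<theta> W p = largest_eigenvalue IT (T.Aop \<theta>) * W p"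
      and W3: "\<forall>p\<in>IT. \<bar>W p - (if p = sT then 1 else \<theta> * bT p sT / (dT p - dT sT))\<bar> \<le> C2 * \<theta>^2"
      using T.main_loc(3)[of \<theta>] th tcT[of \<theta>] unfolding C2_def by blast
    show "\<exists>W :: nat \<times> nat \<Rightarrow> real.
         (\<forall>p. p \<notin> Tset N \<longrightarrow> W p = 0) \<and>
         sqrt (\<Sum>p \<in> Tset N. (W p)^2) = 1 \<and>
         (\<forall>p \<in> Tset N. \<theta> * Theta1 N G W p - Psi N Lam W p = - mu N G Lam \<theta> * W p) \<and>
         (\<forall>p \<in> Tset N. \<bar>W p - (W0 js p + \<theta> * W1 G Lam js p)\<bar> \<le> (C2 + 1) * \<theta>^2)"
    proof (rule exI[of _ W], intro conjI ballI)
      show "\<forall>p. p \<notin> Tset N \<longrightarrow> W p = 0" using W0' by (simp add: IT_def)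
      show "sqrt (\<Sum>p \<in> Tset N. (W p)^2) = 1" using W1' by (simp add: IT_def)
      fix p assume p: "p \<in> Tset N"
      then have pI: "p \<in> IT" by (simp add: IT_def)
      show "\<theta> * Theta1 N G W p - Psi N Lam W p = - mu N G Lam \<theta> * W p"
        using opT[OF W0' pI, of \<theta>] W2 pI muE[of \<theta>] by simp
    next
      fix p assume p: "p \<in> Tset N"
      then have pI: "p \<in> IT" by (simp add: IT_def)
      have "C2 * \<theta>^2 \<le> (C2 + 1) * \<theta>^2" by (intro mult_right_mono) auto
      moreover have "\<bar>W p - (W0 js p + \<theta> * W1 G Lam js p)\<bar> \<le> C2 * \<theta>^2"
        using W3 pI unfolding apx[OF pI, of \<theta>] by blast
      ultimately show "\<bar>W p - (W0 js p + \<theta> * W1 G Lam js p)\<bar> \<le> (C2 + 1) * \<theta>^2" by linarith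
    qed
  qed
  define C3 where "C3 = CT + 2 * CL + 1"
  have C3p: "0 < C3" using CT0 CL0 by (simp add: C3_def)
  have cl3: "\<exists>C>0. \<exists>\<delta>>0. \<forall>\<theta>. 0 < \<theta> \<and> \<theta> < \<delta> \<longrightarrow>
        \<bar>mu N G Lam \<theta> - 2 * lam N G Lam \<theta>
           - (- 2 * \<theta>^2 * (\<Sum>j \<in> {..<N} - {js}. (G j js)^2 / (Lam j - Lam js)))\<bar> \<le> C * \<theta>^3"
    unfolding S_def[symmetric]
  proof (rule exI[of _ C3], rule conjI[OF C3p], rule exI[of _ \<delta>0], rule conjI[OF d0], intro allI impI)
    fix \<theta> :: real assume th: "0 < \<theta> \<and> \<theta> < \<delta>0"
    have "(CT + 2 * CL) * \<theta>^3 \<le> C3 * \<theta>^3" using th by (intro mult_right_mono) (auto simp: C3_def)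
    then show "\<bar>mu N G Lam \<theta> - 2 * lam N G Lam \<theta> - (- 2 * \<theta>^2 * S)\<bar> \<le> C3 * \<theta>^3"
      using c3[of \<theta>] th by linarith
  qed
  have d4: "0 < min \<delta>0 (S / C3)" using d0 Spos C3p by simp
  have cl4: "\<exists>\<delta>>0. \<forall>\<theta>. 0 < \<theta> \<and> \<theta> < \<delta> \<longrightarrow> mu N G Lam \<theta> - 2 * lam N G Lam \<theta> < 0"
  proof (rule exI[of _ "min \<delta>0 (S / C3)"], rule conjI[OF d4], intro allI impI)
    fix \<theta> :: real assume th: "0 < \<theta> \<and> \<theta> < min \<delta>0 (S / C3)"
    have m: "(CT + 2 * CL) * \<theta>^3 \<le> C3 * \<theta>^3" using th by (intro mult_right_mono) (auto simp: C3_def)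
    have "\<bar>mu N G Lam \<theta> - 2 * lam N G Lam \<theta> - (- 2 * \<theta>^2 * S)\<bar> \<le> (CT + 2 * CL) * \<theta>^3"
      using c3[of \<theta>] th by simp
    then have "mu N G Lam \<theta> - 2 * lam N G Lam \<theta> - (- 2 * \<theta>^2 * S) \<le> (CT + 2 * CL) * \<theta>^3"
      by (rule abs_le_D1)
    then have b: "mu N G Lam \<theta> - 2 * lam N G Lam \<theta> \<le> - 2 * \<theta>^2 * S + C3 * \<theta>^3"
      using m by linarith
    have "C3 * \<theta> < S" using th C3p by (simp add: field_simps)
    then have "C3 * \<theta> * \<theta>^2 < S * \<theta>^2" using th by (intro mult_strict_right_mono) auto
    then have "C3 * \<theta>^3 < S * \<theta>^2" by (simp add: power2_eq_square power3_eq_cube mult_ac)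
    moreover have "0 < S * \<theta>^2" using Spos th by simp
    moreover have "- 2 * \<theta>^2 * S = - 2 * (S * \<theta>^2)" by simp
    ultimately show "mu N G Lam \<theta> - 2 * lam N G Lam \<theta> < 0" using b by linarith
  qed
  show ?thesis by (intro conjI) (rule cl1, rule cl2, rule cl3, rule cl4)
qed


end
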